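(* Let $n\geq 2$ and let $(A,\cdot,[\cdot,\ldots,\cdot])$ be a transposed Poisson $n$-Lie algebra. Then for all $h,x_1,\ldots,x_n,y_2,\ldots,y_n\in A$, $$\sum_{j=2}^n[[x_1,\ldots,x_n],y_2,\ldots,y_jh,\ldots,y_n]=\sum_{i=1}^n\sum_{\substack{j=1\\ j\neq i}}^n(-1)^{i-1}[[x_i,y_2,\ldots,y_n],x_1,\ldots,x_jh,\ldots,\hat{x}_i,\ldots,x_n],$$ where on the left $y_jh$ replaces $y_j$ in its slot, and on the right the outer bracket has as its remaining arguments $x_1,\ldots,x_n$ in order with $x_i$ omitted and $x_j$ replaced by $x_jh$.
   Context: An $n$-Lie algebra is a vector space $L$ with an $n$-linear skew-symmetric bracket $[\cdot,\ldots,\cdot]$ satisfying $[[x_1,\ldots,x_n],y_2,\ldots,y_n]=\sum_{i=1}^n[x_1,\ldots,x_{i-1},[x_i,y_2,\ldots,y_n],x_{i+1},\ldots,x_n]$ for all $x_i,y_j\in L$. A transposed Poisson $n$-Lie algebra (over $\mathbb{C}$) is a triple $(A,\cdot,[\cdot,\ldots,\cdot])$ where $(A,\cdot)$ is a commutative associative algebra, $(A,[\cdot,\ldots,\cdot])$ is an $n$-Lie algebra, and for all $h,a_1,\ldots,a_n\in A$: $n\,h\,[a_1,\ldots,a_n]=\sum_{i=1}^n[a_1,\ldots,h a_i,\ldots,a_n]$ (with $ha_i$ in the $i$-th slot). $\hat{x}_i$ means $x_i$ is omitted. *)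

theory Defs
  imports Complex_Main
begin

definition cvec_space :: "(complex \<Rightarrow> 'a::ab_group_add \<Rightarrow> 'a) \<Rightarrow> bool" where
  "cvec_space sc \<longleftrightarrow>
     (\<forall>a x y. sc a (x + y) = sc a x + sc a y) \<and>
     (\<forall>a b x. sc (a + b) x = sc a x + sc b x) \<and>
     (\<forall>a b x. sc a (sc b x) = sc (a * b) x) \<and>
     (\<forall>x. sc 1 x = x)"

text \<open>Commutative associative complex algebra: the ring multiplication of 'a
  (commutative and associative by the class comm_ring; no unit required) is
  bilinear with respect to sc.\<close>

definition comm_assoc_calg :: "(complex \<Rightarrow> 'a::comm_ring \<Rightarrow> 'a) \<Rightarrow> bool" where
  "comm_assoc_calg sc \<longleftrightarrow> cvec_space sc \<and>
     (\<forall>a x y. sc a (x * y) = sc a x * y) \<and>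
     (\<forall>a x y. x * sc a y = sc a (x * y))"

text \<open>An n-ary bracket is modelled as a function on lists; only its values on
  lists of length n matter.\<close>

definition multilinear :: "(complex \<Rightarrow> 'a::ab_group_add \<Rightarrow> 'a) \<Rightarrow> nat \<Rightarrow> ('a list \<Rightarrow> 'a) \<Rightarrow> bool" where
  "multilinear sc n br \<longleftrightarrow>
     (\<forall>xs i u v. length xs = n \<longrightarrow> i < n \<longrightarrow>
        br (xs[i := u + v]) = br (xs[i := u]) + br (xs[i := v])) \<and>
     (\<forall>xs i a u. length xs = n \<longrightarrow> i < n \<longrightarrow>
        br (xs[i := sc a u]) = sc a (br (xs[i := u])))"

definition skew_symmetric :: "nat \<Rightarrow> ('a::ab_group_add list \<Rightarrow> 'a) \<Rightarrow> bool" where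
  "skew_symmetric n br \<longleftrightarrow>
     (\<forall>xs i j. length xs = n \<longrightarrow> i < n \<longrightarrow> j < n \<longrightarrow> i \<noteq> j \<longrightarrow>
        br (xs[i := xs ! j, j := xs ! i]) = - br xs)"

text \<open>Filippov identity:
  [[x_1..x_n], y_2..y_n] = sum_i [x_1,..,[x_i,y_2..y_n],..,x_n].
  ys is the list y_2..y_n of length n-1.\<close>

definition filippov :: "nat \<Rightarrow> ('a::ab_group_add list \<Rightarrow> 'a) \<Rightarrow> bool" where
  "filippov n br \<longleftrightarrow>
     (\<forall>xs ys. length xs = n \<longrightarrow> length ys = n - 1 \<longrightarrow>
        br (br xs # ys) = (\<Sum>i<n. br (xs[i := br (xs ! i # ys)])))"

definition n_Lie :: "(complex \<Rightarrow> 'a::ab_group_add \<Rightarrow> 'a) \<Rightarrow> nat \<Rightarrow> ('a list \<Rightarrow> 'a) \<Rightarrow> bool" where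
  "n_Lie sc n br \<longleftrightarrow> cvec_space sc \<and> multilinear sc n br \<and> skew_symmetric n br \<and> filippov n br"

definition transposed_poisson_nLie ::
  "(complex \<Rightarrow> 'a::comm_ring \<Rightarrow> 'a) \<Rightarrow> nat \<Rightarrow> ('a list \<Rightarrow> 'a) \<Rightarrow> bool" where
  "transposed_poisson_nLie sc n br \<longleftrightarrow>
     comm_assoc_calg sc \<and> n_Lie sc n br \<and>
     (\<forall>h as. length as = n \<longrightarrow>
        sc (of_nat n) (h * br as) = (\<Sum>i<n. br (as[i := h * as ! i])))"

end

theory Submission imports Defs begin

locale tpl =
  fixes sc :: "complex \<Rightarrow> 'a::comm_ring \<Rightarrow> 'a" and n :: nat and br :: "'a list \<Rightarrow> 'a"
  assumes n2: "n \<ge> 2"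
    and sc_add: "\<And>a x y. sc a (x + y) = sc a x + sc a y"
    and sc_adds: "\<And>a b x. sc (a + b) x = sc a x + sc b x"
    and sc_mult: "\<And>a b x. sc a (sc b x) = sc (a * b) x"
    and sc_one: "\<And>x. sc 1 x = x"
    and sc_rm: "\<And>a x y. x * sc a y = sc a (x * y)"
    and br_add: "\<And>xs i u v. length xs = n \<Longrightarrow> i < n \<Longrightarrow>
        br (xs[i := u + v]) = br (xs[i := u]) + br (xs[i := v])"
    and br_sc: "\<And>xs i a u. length xs = n \<Longrightarrow> i < n \<Longrightarrow>
        br (xs[i := sc a u]) = sc a (br (xs[i := u]))"
    and skew: "\<And>xs i j. length xs = n \<Longrightarrow> i < n \<Longrightarrow> j < n \<Longrightarrow> i \<noteq> j \<Longrightarrow>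
        br (xs[i := xs ! j, j := xs ! i]) = - br xs"
    and fil: "\<And>xs ys. length xs = n \<Longrightarrow> length ys = n - 1 \<Longrightarrow>
        br (br xs # ys) = (\<Sum>i<n. br (xs[i := br (xs ! i # ys)]))"
    and tp: "\<And>h as. length as = n \<Longrightarrow>
        sc (of_nat n) (h * br as) = (\<Sum>i<n. br (as[i := h * as ! i]))"
begin

lemma sc_zero: "sc a 0 = 0"
  using sc_add[of a 0 0] by simp
lemma sc_neg: "sc a (- x) = - sc a x"
  using sc_add[of a x "-x"] sc_zero minus_unique by (metis add.right_inverse)
lemma sc_diff: "sc a (x - y) = sc a x - sc a y"
  using sc_add[of a x "-y"] sc_neg by simp
lemma sc_sum: "sc a (\<Sum>s\<in>S. f s) = (\<Sum>s\<in>S. sc a (f s))"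
  by (induction S rule: infinite_finite_induct) (auto simp: sc_zero sc_add)
lemma sc_inv: "c \<noteq> 0 \<Longrightarrow> sc (1/c) (sc c x) = x"
proof -
  assume c: "c \<noteq> 0"
  have "sc (1/c) (sc c x) = sc (1/c * c) x" by (rule sc_mult)
  also have "1/c * c = 1" using c by simp
  finally show ?thesis using sc_one by simp
qed
lemma sc_cancel: "c \<noteq> 0 \<Longrightarrow> sc c x = sc c y \<Longrightarrow> x = y"
  by (metis sc_inv)

lemma br_zero: "length xs = n \<Longrightarrow> i < n \<Longrightarrow> br (xs[i := 0]) = 0"
  using br_add[of xs i 0 0] by simp
lemma br_neg: "length xs = n \<Longrightarrow> i < n \<Longrightarrow> br (xs[i := - u]) = - br (xs[i := u])"
  using br_add[of xs i u "-u"] br_zero[of xs i] minus_unique by (metis add.right_inverse)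
lemma br_diff: "length xs = n \<Longrightarrow> i < n \<Longrightarrow> br (xs[i := u - v]) = br (xs[i := u]) - br (xs[i := v])"
  using br_add[of xs i u "-v"] br_neg[of xs i v] by simp
lemma br_sum: "length xs = n \<Longrightarrow> i < n \<Longrightarrow> br (xs[i := (\<Sum>s\<in>S. f s)]) = (\<Sum>s\<in>S. br (xs[i := f s]))"
  by (induction S rule: infinite_finite_induct) (auto simp: br_zero br_add)

lemma l0: "length ys = n - 1 \<Longrightarrow> u # ys = (0 # ys)[0 := u] \<and> length (0 # ys) = n \<and> 0 < n"
  using n2 by auto
lemma br0_sc: "length ys = n - 1 \<Longrightarrow> br (sc a u # ys) = sc a (br (u # ys))"
proof -
  assume l: "length ys = n - 1"
  have L: "length (0 # ys) = n" "0 < n" using l n2 by auto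
  show ?thesis using br_sc[OF L, of a u] by simp
qed
lemma br0_sum: "length ys = n - 1 \<Longrightarrow> br ((\<Sum>s\<in>S. f s) # ys) = (\<Sum>s\<in>S. br (f s # ys))"
proof -
  assume l: "length ys = n - 1"
  have L: "length (0 # ys) = n" "0 < n" using l n2 by auto
  show ?thesis using br_sum[OF L, of f S] by simp
qed
lemma br0_diff: "length ys = n - 1 \<Longrightarrow> br ((u - v) # ys) = br (u # ys) - br (v # ys)"
proof -
  assume l: "length ys = n - 1"
  have L: "length (0 # ys) = n" "0 < n" using l n2 by auto
  show ?thesis using br_diff[OF L, of u v] by simp
qed

lemma sgn_rem: "length xs = n \<Longrightarrow> i < n \<Longrightarrow>
  br (u # (take i xs @ drop (Suc i) xs)) = (if even i then br (xs[i:=u]) else - br (xs[i:=u]))"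
proof (induction i arbitrary: xs)
  case 0
  then obtain x xs0 where "xs = x # xs0" by (cases xs) auto
  then show ?case by simp
next
  case (Suc i)
  define xs' where "xs' = xs[Suc i := xs!i]"
  have len: "length xs' = n" using Suc.prems by (simp add: xs'_def)
  have e1: "take i xs' @ drop (Suc i) xs' = take (Suc i) xs @ drop (Suc (Suc i)) xs"
  proof -
    have a: "drop (Suc i) xs' = xs'!(Suc i) # drop (Suc (Suc i)) xs'"
      using len Suc.prems by (simp add: Cons_nth_drop_Suc)
    have b: "drop (Suc (Suc i)) xs' = drop (Suc (Suc i)) xs" by (simp add: xs'_def)
    have c: "take (Suc i) xs = take i xs @ [xs!i]" using Suc.prems by (simp add: take_Suc_conv_app_nth)
    show ?thesis using a b c Suc.prems by (simp add: xs'_def)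
  qed
  have e2: "xs'[i:=u] = (xs[Suc i := u])[i := (xs[Suc i := u]) ! Suc i, Suc i := (xs[Suc i := u]) ! i]"
    using Suc.prems unfolding xs'_def
    by (rule_tac nth_equalityI) (auto simp: nth_list_update)
  have e3: "br (xs'[i:=u]) = - br (xs[Suc i := u])"
    using skew[of "xs[Suc i:=u]" i "Suc i"] e2 Suc.prems by simp
  have "br (u # (take (Suc i) xs @ drop (Suc (Suc i)) xs)) = (if even i then br (xs'[i:=u]) else - br (xs'[i:=u]))"
    using Suc.IH[of xs'] len Suc.prems e1 by simp
  then show ?case using e3 by simp
qed

lemma nm: obtains m where "n = Suc m" and "n - 1 = m"
  using n2 by (cases n) auto

lemma tp0: "length ys = n - 1 \<Longrightarrow>
  sc (of_nat n) (h * br (u#ys)) = br (h*u # ys) + (\<Sum>j<n-1. br (u # ys[j := h * ys!j]))"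
proof -
  assume l: "length ys = n - 1"
  obtain m where m: "n = Suc m" "n - 1 = m" using nm by blast
  have "sc (of_nat n) (h * br (u#ys)) = (\<Sum>i<Suc m. br ((u#ys)[i := h * (u#ys) ! i]))"
    using tp[of "u#ys" h] l m by simp
  also have "\<dots> = br (h*u # ys) + (\<Sum>j<m. br (u # ys[j := h * ys!j]))"
    unfolding sum.lessThan_Suc_shift by simp
  finally show ?thesis using m by simp
qed

lemma tpupd: "length xs = n \<Longrightarrow> i < n \<Longrightarrow>
  sc (of_nat n) (h * br (xs[i:=v])) = br (xs[i := h*v]) + (\<Sum>j\<in>{..<n}-{i}. br (xs[i:=v, j := h * xs!j]))"
proof -
  assume l: "length xs = n" and i: "i < n"
  have "sc (of_nat n) (h * br (xs[i:=v])) = (\<Sum>j<n. br ((xs[i:=v])[j := h * xs[i:=v] ! j]))"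
    using tp[of "xs[i:=v]" h] l by simp
  also have "\<dots> = br ((xs[i:=v])[i := h * xs[i:=v] ! i]) + (\<Sum>j\<in>{..<n}-{i}. br ((xs[i:=v])[j := h * xs[i:=v] ! j]))"
    using i by (simp add: sum.remove)
  also have "\<dots> = br (xs[i := h*v]) + (\<Sum>j\<in>{..<n}-{i}. br (xs[i:=v, j := h * xs!j]))"
    using i l by (auto intro!: sum.cong)
  finally show ?thesis .
qed

lemma sum_rm_if: "(\<Sum>k\<in>{..<n}-{i}. g k) = (\<Sum>k<n. if k = i then 0 else g k)"
  by (simp add: sum.If_cases Diff_eq)

lemma sumswap: "(\<Sum>i<n. \<Sum>k\<in>{..<n}-{i}. f i k) = (\<Sum>k<n. \<Sum>i\<in>{..<n}-{k}. f i k)"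
  unfolding sum_rm_if
  by (subst sum.swap) (auto intro!: sum.cong)

lemma keyD:
  assumes lx: "length xs = n" and ly: "length ys = n - 1"
  shows "br (h * br xs # ys) = (\<Sum>i<n. br (xs[i := h * br (xs!i # ys)]))"
proof -
  define N :: complex where "N = of_nat n"
  define X where "X = br xs"
  define a where "a = br (h * X # ys)"
  define T where "T = (\<Sum>i<n. br (xs[i := h * br (xs!i # ys)]))"
  define Q where "Q = (\<Sum>i<n. \<Sum>j\<in>{..<n}-{i}. br (xs[i := br (xs!i # ys), j := h * xs!j]))"
  define S where "S = (\<Sum>j<n-1. br (X # ys[j := h*ys!j]))"
  define Y where "Y = sc N (h * br (X # ys))"
  have fQ: "Y = T + Q"
  proof -
    have "Y = (\<Sum>i<n. sc N (h * br (xs[i := br (xs!i#ys)])))"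
      unfolding Y_def X_def using fil[OF lx ly] by (simp add: sum_distrib_left sc_sum)
    also have "\<dots> = (\<Sum>i<n. br (xs[i := h * br (xs!i#ys)]) + (\<Sum>j\<in>{..<n}-{i}. br (xs[i := br (xs!i # ys), j := h * xs!j])))"
      unfolding N_def using tpupd lx by (auto intro!: sum.cong)
    finally show ?thesis unfolding T_def Q_def by (simp add: sum.distrib)
  qed
  have fS: "Y = a + S" unfolding Y_def a_def S_def N_def using tp0[OF ly] .
  have f1: "sc N a = (\<Sum>i<n. br (br (xs[i := h*xs!i]) # ys))"
  proof -
    have "sc N a = br (sc N (h*X) # ys)" unfolding a_def using br0_sc[OF ly] by simp
    also have "\<dots> = br ((\<Sum>i<n. br (xs[i := h*xs!i])) # ys)" unfolding N_def X_def using tp[OF lx] by simp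
    finally show ?thesis using br0_sum[OF ly] by simp
  qed
  have f2: "br (br (xs[i := h*xs!i]) # ys) = br (xs[i := br (h*xs!i # ys)]) + (\<Sum>k\<in>{..<n}-{i}. br (xs[i := h*xs!i, k := br (xs!k # ys)]))"
    if i: "i < n" for i
  proof -
    have "br (br (xs[i := h*xs!i]) # ys) = (\<Sum>k<n. br ((xs[i := h*xs!i])[k := br ((xs[i := h*xs!i]) ! k # ys)]))"
      using fil[of "xs[i := h*xs!i]" ys] lx ly by simp
    also have "\<dots> = br ((xs[i := h*xs!i])[i := br ((xs[i := h*xs!i]) ! i # ys)]) + (\<Sum>k\<in>{..<n}-{i}. br ((xs[i := h*xs!i])[k := br ((xs[i := h*xs!i]) ! k # ys)]))"
      using i by (simp add: sum.remove)
    also have "\<dots> = br (xs[i := br (h*xs!i # ys)]) + (\<Sum>k\<in>{..<n}-{i}. br (xs[i := h*xs!i, k := br (xs!k # ys)]))"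
      using i lx by (auto intro!: sum.cong)
    finally show ?thesis .
  qed
  have f3: "br (xs[i := br (h*xs!i # ys)]) = sc N (br (xs[i := h * br (xs!i#ys)])) - (\<Sum>j<n-1. br (xs[i := br (xs!i # ys[j := h*ys!j])]))"
    if i: "i < n" for i
  proof -
    have "br (h*xs!i # ys) = sc N (h * br (xs!i#ys)) - (\<Sum>j<n-1. br (xs!i # ys[j := h*ys!j]))"
      using tp0[OF ly, of h "xs!i"] unfolding N_def by (simp add: algebra_simps)
    then show ?thesis using i lx by (simp add: br_diff br_sc br_sum)
  qed
  have f4: "(\<Sum>i<n. \<Sum>j<n-1. br (xs[i := br (xs!i # ys[j := h*ys!j])])) = S"
  proof -
    have "(\<Sum>i<n. \<Sum>j<n-1. br (xs[i := br (xs!i # ys[j := h*ys!j])])) = (\<Sum>j<n-1. \<Sum>i<n. br (xs[i := br (xs!i # ys[j := h*ys!j])]))"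
      by (rule sum.swap)
    also have "\<dots> = S" unfolding S_def X_def using fil lx ly by (auto intro!: sum.cong)
    finally show ?thesis .
  qed
  have f5: "(\<Sum>i<n. \<Sum>k\<in>{..<n}-{i}. br (xs[i := h*xs!i, k := br (xs!k # ys)])) = Q"
    unfolding Q_def by (subst sumswap) (auto intro!: sum.cong simp: list_update_swap)
  have "sc N a = (\<Sum>i<n. sc N (br (xs[i := h * br (xs!i#ys)])) - (\<Sum>j<n-1. br (xs[i := br (xs!i # ys[j := h*ys!j])]))
        + (\<Sum>k\<in>{..<n}-{i}. br (xs[i := h*xs!i, k := br (xs!k # ys)])))"
    unfolding f1 using f2 f3 by (auto intro!: sum.cong)
  also have "\<dots> = sc N T - S + Q"
    unfolding T_def using f4 f5 by (simp add: sum.distrib sum_subtractf sc_sum)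
  finally have "sc N a = sc N T - S + Q" .
  then have h1: "S + sc N a = Q + sc N T" by (simp add: algebra_simps)
  have h2: "S + a = Q + T" using fQ fS by (simp add: algebra_simps)
  have "sc N a - a = (S + sc N a) - (S + a)" by simp
  also have "\<dots> = (Q + sc N T) - (Q + T)" using h1 h2 by simp
  also have "\<dots> = sc N T - T" by simp
  finally have e: "sc N a - a = sc N T - T" .
  have dec: "sc N x - x = sc (N - 1) x" for x
    using sc_adds[of "N - 1" 1 x] sc_one by simp
  have "N - 1 \<noteq> 0" unfolding N_def using n2 by simp
  then have "a = T" using e dec sc_cancel by metis
  then show ?thesis unfolding a_def T_def X_def .
qed

end


lemma tA: "n \<ge> 2 \<Longrightarrow> transposed_poisson_nLie sc n br \<Longrightarrow> tpl sc n br"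
  unfolding tpl_def transposed_poisson_nLie_def n_Lie_def comm_assoc_calg_def
      cvec_space_def multilinear_def skew_symmetric_def filippov_def by auto

theorem mainTheorem3:
  fixes sc :: "complex \<Rightarrow> 'a::comm_ring \<Rightarrow> 'a"
    and br :: "'a list \<Rightarrow> 'a"
    and n :: nat
    and h :: 'a and xs ys :: "'a list"
  assumes "n \<ge> 2"
    and "transposed_poisson_nLie sc n br"
    and "length xs = n" and "length ys = n - 1"
  shows "(\<Sum>j<n - 1. br (br xs # ys[j := ys ! j * h])) =
         (\<Sum>i<n. \<Sum>j\<in>{..<n} - {i}.
            (let zs = xs[j := xs ! j * h];
                 t = br (br (xs ! i # ys) # (take i zs @ drop (Suc i) zs))
             in if even i then t else - t))"
proof -
  interpret tpl sc n br by (rule tA[OF assms(1,2)])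
  note lx = assms(3) and ly = assms(4)
  define N :: complex where "N = of_nat n"
  define Y where "Y = sc N (h * br (br xs # ys))"
  define a where "a = br (h * br xs # ys)"
  define T where "T = (\<Sum>i<n. br (xs[i := h * br (xs!i # ys)]))"
  have aT: "a = T" unfolding a_def T_def using keyD[OF lx ly] .
  have L: "(\<Sum>j<n - 1. br (br xs # ys[j := ys ! j * h])) = Y - a"
  proof -
    have c: "(\<Sum>j<n - 1. br (br xs # ys[j := ys ! j * h])) = (\<Sum>j<n - 1. br (br xs # ys[j := h * ys ! j]))"
      by (rule sum.cong[OF refl]) (simp only: mult.commute[of "ys ! _" h])
    have "Y = a + (\<Sum>j<n - 1. br (br xs # ys[j := h * ys ! j]))"
      unfolding Y_def a_def N_def by (rule tp0[OF ly])
    then show ?thesis unfolding c by (simp add: algebra_simps)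
  qed
  have R1: "(let zs = xs[j := xs ! j * h];
                 t = br (br (xs ! i # ys) # (take i zs @ drop (Suc i) zs))
             in if even i then t else - t) = br (xs[i := br (xs!i # ys), j := h * xs!j])"
    if i: "i < n" and j: "j \<in> {..<n} - {i}" for i j
  proof -
    have l: "length (xs[j := xs ! j * h]) = n" using lx by simp
    have ji: "j \<noteq> i" using j by simp
    have sw: "xs[j := xs ! j * h, i := br (xs ! i # ys)] = xs[i := br (xs!i # ys), j := h * xs!j]"
      by (subst list_update_swap[OF ji]) (simp only: mult.commute[of "xs ! j" h])
    note te = sgn_rem[OF l i, of "br (xs ! i # ys)"]
    have "(let zs = xs[j := xs ! j * h];
                 t = br (br (xs ! i # ys) # (take i zs @ drop (Suc i) zs))
             in if even i then t else - t) = br (xs[j := xs ! j * h, i := br (xs ! i # ys)])"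
      unfolding Let_def te by simp
    then show ?thesis unfolding sw .
  qed
  have R: "(\<Sum>i<n. \<Sum>j\<in>{..<n} - {i}.
            (let zs = xs[j := xs ! j * h];
                 t = br (br (xs ! i # ys) # (take i zs @ drop (Suc i) zs))
             in if even i then t else - t)) = Y - T"
  proof -
    have "Y = (\<Sum>i<n. sc N (h * br (xs[i := br (xs!i#ys)])))"
      unfolding Y_def using fil[OF lx ly] by (simp add: sum_distrib_left sc_sum)
    also have "\<dots> = (\<Sum>i<n. br (xs[i := h * br (xs!i#ys)]) + (\<Sum>j\<in>{..<n}-{i}. br (xs[i := br (xs!i # ys), j := h * xs!j])))"
      unfolding N_def using tpupd lx by (auto intro!: sum.cong)
    finally have YT: "Y = T + (\<Sum>i<n. \<Sum>j\<in>{..<n}-{i}. br (xs[i := br (xs!i # ys), j := h * xs!j]))"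
      unfolding T_def by (simp add: sum.distrib)
    have "(\<Sum>i<n. \<Sum>j\<in>{..<n} - {i}.
            (let zs = xs[j := xs ! j * h];
                 t = br (br (xs ! i # ys) # (take i zs @ drop (Suc i) zs))
             in if even i then t else - t)) = (\<Sum>i<n. \<Sum>j\<in>{..<n}-{i}. br (xs[i := br (xs!i # ys), j := h * xs!j]))"
      by (rule sum.cong[OF refl], rule sum.cong[OF refl], rule R1) auto
    then show ?thesis using YT by simp
  qed
  note L
  also have "Y - a = Y - T" using aT by simp
  also note R[symmetric]
  finally show ?thesis .
qed

end
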